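(* Let $G$ be labeled by an $\mathcal{AL}$ labeling $\langle r,d_1,d_2\rangle$, and let $x$ be a black node that belongs to class $A$ or $B$. Then $\mathit{A\_or\_B}(x)$ returns ``$B$'' if $x$ is in class $B$, and returns ``$A$'' otherwise. The robot is in $x$ when $\mathit{A\_or\_B}(x)$ exits. In the call $\mathit{A\_or\_B}(x)$ the robot needs $O(d_1\log\Delta)$ bits of memory, and the total number of edge traversals is $O(\Delta^{2d_1-1})$.
   Context: $G$ is an undirected connected anonymous graph (loops and multiple edges allowed) of maximum degree $\Delta$ and diameter $D$, with ports $0,\dots,\mathtt{deg}(v)-1$ at each node $v$; the robot sees the degree, the color of the current node and the entry port and moves by choosing exit ports. $\mathcal{AL}$ labeling $\langle r,d_1,d_2\rangle$: root $r$; $d(\cdot,\cdot)$ graph distance; integers $d_1\ge 2$, $d_2$ with $\lfloor d_2/2\rfloor\ge d_1$; $q=d_1+d_2+2$; classes $C=\{v:d(r,v)\bmod q=0\}$, $D=\{v:d(r,v)\bmod q=1\}$, $A=\{v:d(r,v)\bmod q=d_2+1\}$, $B=\{v:d(r,v)\bmod q=d_1+d_2+1\}$; nodes of $A\cup B\cup C\cup D$ are black, others white; it is assumed $D\ge d_1+d_2+1$. The white radius $R_W(v)$ of a node $v$ is $\ell-1$, where $\ell$ is the distance from $v$ to a nearest black node. White local search from $u$ within radius $\ell$: the recursive procedure $\mathit{WLS}(v,k,\mathit{inport})$, called as $\mathit{WLS}(u,\ell,-1)$: if $k=0$ report $v$; otherwise, if $v$ is black and $k\ne\ell$, return; otherwise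 for each port $\mathit{outport}\neq\mathit{inport}$ of $v$ in increasing order, move through it to neighbor $w$, call $\mathit{WLS}(w,k-1,\text{entry port at }w)$, and move back to $v$. Procedure $\mathit{A\_or\_B}(x)$: perform a white local search from $x$ within radius $d_1$; return ``$A$'' if some reported white node has white radius $d_1-1$, and ``$B$'' otherwise. The robot ends at $x$. *)

theory Defs
  imports Complex_Main
begin

text \<open>A graph on the vertex set V (natural numbers as vertex names; any finite
graph is isomorphic to such a one). Node v has ports 0..deg v - 1; leaving v
through port p leads to nbr v p, where the edge is entered through port
back v p. Loops and multiple edges are allowed.\<close>

definition port_graph ::
  "nat set \<Rightarrow> (nat \<Rightarrow> nat) \<Rightarrow> (nat \<Rightarrow> nat \<Rightarrow> nat) \<Rightarrow> (nat \<Rightarrow> nat \<Rightarrow> nat) \<Rightarrow> bool" where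
  "port_graph V deg nbr back \<longleftrightarrow> finite V \<and> V \<noteq> {} \<and>
     (\<forall>v\<in>V. \<forall>p<deg v. nbr v p \<in> V \<and> back v p < deg (nbr v p) \<and>
        nbr (nbr v p) (back v p) = v \<and> back (nbr v p) (back v p) = p)"

fun walk_end :: "(nat \<Rightarrow> nat) \<Rightarrow> (nat \<Rightarrow> nat \<Rightarrow> nat) \<Rightarrow> nat \<Rightarrow> nat list \<Rightarrow> nat option" where
  "walk_end deg nbr u [] = Some u"
| "walk_end deg nbr u (p # ps) = (if p < deg u then walk_end deg nbr (nbr u p) ps else None)"

definition connected_pg :: "nat set \<Rightarrow> (nat \<Rightarrow> nat) \<Rightarrow> (nat \<Rightarrow> nat \<Rightarrow> nat) \<Rightarrow> bool" where
  "connected_pg V deg nbr \<longleftrightarrow> (\<forall>u\<in>V. \<forall>v\<in>V. \<exists>ps. walk_end deg nbr u ps = Some v)"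

definition gdist :: "(nat \<Rightarrow> nat) \<Rightarrow> (nat \<Rightarrow> nat \<Rightarrow> nat) \<Rightarrow> nat \<Rightarrow> nat \<Rightarrow> nat" where
  "gdist deg nbr u v = (LEAST n. \<exists>ps. length ps = n \<and> walk_end deg nbr u ps = Some v)"

definition max_degree :: "nat set \<Rightarrow> (nat \<Rightarrow> nat) \<Rightarrow> nat" where
  "max_degree V deg = Max (deg ` V)"

definition diameter :: "nat set \<Rightarrow> (nat \<Rightarrow> nat) \<Rightarrow> (nat \<Rightarrow> nat \<Rightarrow> nat) \<Rightarrow> nat" where
  "diameter V deg nbr = Max {gdist deg nbr u v | u v. u \<in> V \<and> v \<in> V}"

definition al_q :: "nat \<Rightarrow> nat \<Rightarrow> nat" where "al_q d1 d2 = d1 + d2 + 2"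

definition inC where "inC deg nbr r d1 d2 v \<longleftrightarrow> gdist deg nbr r v mod al_q d1 d2 = 0"
definition inD where "inD deg nbr r d1 d2 v \<longleftrightarrow> gdist deg nbr r v mod al_q d1 d2 = 1"
definition inA where "inA deg nbr r d1 d2 v \<longleftrightarrow> gdist deg nbr r v mod al_q d1 d2 = d2 + 1"
definition inB where "inB deg nbr r d1 d2 v \<longleftrightarrow> gdist deg nbr r v mod al_q d1 d2 = d1 + d2 + 1"

text \<open>The colour seen by the robot: True = black, False = white.\<close>
definition al_black :: "(nat \<Rightarrow> nat) \<Rightarrow> (nat \<Rightarrow> nat \<Rightarrow> nat) \<Rightarrow> nat \<Rightarrow> nat \<Rightarrow> nat \<Rightarrow> nat \<Rightarrow> bool" where
  "al_black deg nbr r d1 d2 v \<longleftrightarrow>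
     inA deg nbr r d1 d2 v \<or> inB deg nbr r d1 d2 v \<or> inC deg nbr r d1 d2 v \<or> inD deg nbr r d1 d2 v"

definition al_labeling ::
  "nat set \<Rightarrow> (nat \<Rightarrow> nat) \<Rightarrow> (nat \<Rightarrow> nat \<Rightarrow> nat) \<Rightarrow> nat \<Rightarrow> nat \<Rightarrow> nat \<Rightarrow> bool" where
  "al_labeling V deg nbr r d1 d2 \<longleftrightarrow> r \<in> V \<and> d1 \<ge> 2 \<and> d2 div 2 \<ge> d1 \<and>
     diameter V deg nbr \<ge> d1 + d2 + 1"

text \<open>A robot is a transition function: given its memory state and the observation
(degree, colour of the current node, entry port or None at the start), it produces a
new memory state and either moves through an exit port or halts with a result.\<close>

datatype 'r action = Move nat | Halt 'r

type_synonym ('s, 'r) robot = "'s \<Rightarrow> nat \<Rightarrow> bool \<Rightarrow> nat option \<Rightarrow> 's \<times> 'r action"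

definition robot_step ::
  "(nat \<Rightarrow> nat) \<Rightarrow> (nat \<Rightarrow> nat \<Rightarrow> nat) \<Rightarrow> (nat \<Rightarrow> nat \<Rightarrow> nat) \<Rightarrow> (nat \<Rightarrow> bool) \<Rightarrow> ('s, 'r) robot
   \<Rightarrow> nat \<times> nat option \<times> 's \<Rightarrow> nat \<times> nat option \<times> 's" where
  "robot_step deg nbr back col T c = (case c of (v, e, s) \<Rightarrow>
     (case T s (deg v) (col v) e of
        (s', Move p) \<Rightarrow> (nbr v p, Some (back v p), s')
      | (s', Halt res) \<Rightarrow> (v, e, s)))"

text \<open>Configuration (position, entry port, memory) after i steps, starting at x with memory s0.\<close>
definition robot_conf ::
  "(nat \<Rightarrow> nat) \<Rightarrow> (nat \<Rightarrow> nat \<Rightarrow> nat) \<Rightarrow> (nat \<Rightarrow> nat \<Rightarrow> nat) \<Rightarrow> (nat \<Rightarrow> bool) \<Rightarrow> ('s, 'r) robot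
   \<Rightarrow> 's \<Rightarrow> nat \<Rightarrow> nat \<Rightarrow> nat \<times> nat option \<times> 's" where
  "robot_conf deg nbr back col T s0 x i = (robot_step deg nbr back col T ^^ i) (x, None, s0)"

definition robot_exec ::
  "(nat \<Rightarrow> nat) \<Rightarrow> (nat \<Rightarrow> nat \<Rightarrow> nat) \<Rightarrow> (nat \<Rightarrow> nat \<Rightarrow> nat) \<Rightarrow> (nat \<Rightarrow> bool) \<Rightarrow> ('s, 'r) robot
   \<Rightarrow> 's \<Rightarrow> nat \<Rightarrow> nat \<Rightarrow> nat \<Rightarrow> 'r \<Rightarrow> bool" where
  "robot_exec deg nbr back col T s0 x n y res \<longleftrightarrow>
     (\<forall>i<n. case robot_conf deg nbr back col T s0 x i of (v, e, s) \<Rightarrow>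
              \<exists>s' p. T s (deg v) (col v) e = (s', Move p) \<and> p < deg v) \<and>
     (case robot_conf deg nbr back col T s0 x n of (v, e, s) \<Rightarrow>
              (\<exists>s'. T s (deg v) (col v) e = (s', Halt res)) \<and> v = y)"

datatype answer = AnsA | AnsB

text \<open>Control modes: WF/WB = white local search, arrived at a new node / arrived back
at a parent; CF/CB = the same for the local search within radius d1-1 used to decide
whether a reported white node has white radius d1-1.\<close>
datatype mode = WF | WB | CF | CB

record rstate =
  rmode :: mode
  wstk :: "nat list"   \<comment> \<open>entry ports along the current white-local-search path (top first)\<close>
  cstk :: "nat list"   \<comment> \<open>entry ports along the current check-search path (top first)\<close>
  found :: bool        \<comment> \<open>some reported white node with white radius d1-1 found\<close>
  blk :: bool          \<comment> \<open>black node found in current check search\<close>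

definition rinit :: rstate where
  "rinit = \<lparr>rmode = WF, wstk = [], cstk = [], found = False, blk = False\<rparr>"

text \<open>Bits of memory: a prefix-free encoding (2 bits mode, 2 flag bits, Elias-gamma-like
codes for the ports with a continuation bit each, and a terminator per list).\<close>
fun bitlen :: "nat \<Rightarrow> nat" where
  "bitlen n = (if n < 2 then 1 else Suc (bitlen (n div 2)))"

definition state_bits :: "rstate \<Rightarrow> nat" where
  "state_bits s = 6 + (\<Sum>p\<leftarrow>wstk s @ cstk s. 2 * bitlen p)"

definition next_port :: "nat \<Rightarrow> nat option \<Rightarrow> nat \<Rightarrow> nat option" where
  "next_port dg ip j =
     (if \<exists>q. j \<le> q \<and> q < dg \<and> ip \<noteq> Some q
      then Some (LEAST q. j \<le> q \<and> q < dg \<and> ip \<noteq> Some q) else None)"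

definition top_port :: "nat list \<Rightarrow> nat option" where
  "top_port st = (case st of [] \<Rightarrow> None | e # _ \<Rightarrow> Some e)"

definition w_ret :: "rstate \<Rightarrow> rstate \<times> answer action" where
  "w_ret s = (case wstk s of
      [] \<Rightarrow> (s, Halt (if found s then AnsA else AnsB))
    | e # rest \<Rightarrow> (s\<lparr>wstk := rest, rmode := WB\<rparr>, Move e))"

definition w_try :: "rstate \<Rightarrow> nat \<Rightarrow> nat \<Rightarrow> rstate \<times> answer action" where
  "w_try s dg j = (case next_port dg (top_port (wstk s)) j of
      Some q \<Rightarrow> (s\<lparr>rmode := WF\<rparr>, Move q)
    | None \<Rightarrow> w_ret s)"

definition c_ret :: "rstate \<Rightarrow> rstate \<times> answer action" where
  "c_ret s = (case cstk s of
      [] \<Rightarrow> w_ret (s\<lparr>found := (found s \<or> \<not> blk s), blk := False\<rparr>)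
    | e # rest \<Rightarrow> (s\<lparr>cstk := rest, rmode := CB\<rparr>, Move e))"

definition c_try :: "rstate \<Rightarrow> nat \<Rightarrow> nat \<Rightarrow> rstate \<times> answer action" where
  "c_try s dg j = (case next_port dg (top_port (cstk s)) j of
      Some q \<Rightarrow> (s\<lparr>rmode := CF\<rparr>, Move q)
    | None \<Rightarrow> c_ret s)"

definition c_node :: "nat \<Rightarrow> rstate \<Rightarrow> nat \<Rightarrow> bool \<Rightarrow> rstate \<times> answer action" where
  "c_node d1 s dg bl =
     (if bl then c_ret (s\<lparr>blk := True\<rparr>)
      else if length (cstk s) = d1 - 1 then c_ret s
      else c_try s dg 0)"

definition push :: "nat option \<Rightarrow> nat list \<Rightarrow> nat list" where
  "push e st = (case e of None \<Rightarrow> st | Some p \<Rightarrow> p # st)"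

definition aob_robot :: "nat \<Rightarrow> (rstate, answer) robot" where
  "aob_robot d1 s dg bl e = (case rmode s of
      WF \<Rightarrow> (let s1 = s\<lparr>wstk := push e (wstk s)\<rparr>; k = length (wstk s1) in
              if k = d1 then
                (if bl then w_ret s1 else c_node d1 (s1\<lparr>cstk := [], blk := False\<rparr>) dg bl)
              else if bl \<and> k \<noteq> 0 then w_ret s1
              else w_try s1 dg 0)
    | WB \<Rightarrow> w_try s dg (case e of None \<Rightarrow> 0 | Some q \<Rightarrow> Suc q)
    | CF \<Rightarrow> c_node d1 (s\<lparr>cstk := push e (cstk s)\<rparr>) dg bl
    | CB \<Rightarrow> c_try s dg (case e of None \<Rightarrow> 0 | Some q \<Rightarrow> Suc q))"

end

theory Submission
  imports Defs
begin


declare bitlen.simps[simp del]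

locale pgr =
  fixes V :: "nat set" and deg :: "nat \<Rightarrow> nat" and nbr :: "nat \<Rightarrow> nat \<Rightarrow> nat" and bk :: "nat \<Rightarrow> nat \<Rightarrow> nat"
  assumes pg: "port_graph V deg nbr bk" and conn: "connected_pg V deg nbr"
begin

abbreviation gd where "gd \<equiv> gdist deg nbr"
abbreviation we where "we \<equiv> walk_end deg nbr"

lemma pgD: "v \<in> V \<Longrightarrow> p < deg v \<Longrightarrow> nbr v p \<in> V \<and> bk v p < deg (nbr v p) \<and>
   nbr (nbr v p) (bk v p) = v \<and> bk (nbr v p) (bk v p) = p"
  using pg unfolding port_graph_def by blast

lemma finV: "finite V" using pg unfolding port_graph_def by blast

lemma we_append: "we u (ps @ qs) = (case we u ps of None \<Rightarrow> None | Some w \<Rightarrow> we w qs)"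
  by (induction ps arbitrary: u) auto

lemma we_V: "v \<in> V \<Longrightarrow> we v ps = Some z \<Longrightarrow> z \<in> V"
proof (induction ps arbitrary: v)
  case (Cons p ps)
  then show ?case using pgD by (simp split: if_splits) blast
qed simp

lemma we_rev: "v \<in> V \<Longrightarrow> we v ps = Some w \<Longrightarrow> \<exists>qs. length qs = length ps \<and> we w qs = Some v"
proof (induction ps arbitrary: v)
  case Nil then show ?case by auto
next
  case (Cons p ps)
  then have p: "p < deg v" and w: "we (nbr v p) ps = Some w" by (auto split: if_splits)
  from pgD[OF Cons.prems(1) p] have V': "nbr v p \<in> V" and b: "bk v p < deg (nbr v p)"
    and nn: "nbr (nbr v p) (bk v p) = v" by auto
  from Cons.IH[OF V' w] obtain qs where "length qs = length ps" "we w qs = Some (nbr v p)" by blast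
  then show ?case using b nn by (intro exI[of _ "qs @ [bk v p]"]) (simp add: we_append)
qed

lemma gd_le: "we u ps = Some v \<Longrightarrow> gd u v \<le> length ps"
  unfolding gdist_def by (rule Least_le) auto

lemma gd_ex: "we u ps = Some v \<Longrightarrow> \<exists>qs. length qs = gd u v \<and> we u qs = Some v"
  unfolding gdist_def by (rule LeastI) auto

lemma gd_conn: "u \<in> V \<Longrightarrow> v \<in> V \<Longrightarrow> \<exists>qs. length qs = gd u v \<and> we u qs = Some v"
  using conn unfolding connected_pg_def by (meson gd_ex)

lemma gd_sym_le: "u \<in> V \<Longrightarrow> v \<in> V \<Longrightarrow> gd v u \<le> gd u v"
proof -
  assume u: "u \<in> V" and v: "v \<in> V"
  obtain ps where "length ps = gd u v" "we u ps = Some v" using gd_conn[OF u v] by blast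
  then obtain qs where "length qs = gd u v" "we v qs = Some u" using we_rev[OF u] by metis
  then show ?thesis using gd_le by metis
qed

lemma gd_sym: "u \<in> V \<Longrightarrow> v \<in> V \<Longrightarrow> gd v u = gd u v"
  using gd_sym_le by (meson antisym)

lemma gd_tri: "u \<in> V \<Longrightarrow> v \<in> V \<Longrightarrow> w \<in> V \<Longrightarrow> gd u w \<le> gd u v + gd v w"
proof -
  assume u: "u \<in> V" and v: "v \<in> V" and w: "w \<in> V"
  obtain ps where p: "length ps = gd u v" "we u ps = Some v" using gd_conn[OF u v] by blast
  obtain qs where q: "length qs = gd v w" "we v qs = Some w" using gd_conn[OF v w] by blast
  have "we u (ps @ qs) = Some w" using p q by (simp add: we_append)
  then show ?thesis using gd_le p q by fastforce
qed

lemma gd_walk: "r \<in> V \<Longrightarrow> w \<in> V \<Longrightarrow> we w ps = Some z \<Longrightarrow>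
   gd r z \<le> gd r w + length ps \<and> gd r w \<le> gd r z + length ps"
proof -
  assume r: "r \<in> V" and w: "w \<in> V" and z: "we w ps = Some z"
  have zV: "z \<in> V" using we_V[OF w z] .
  have 1: "gd w z \<le> length ps" using gd_le[OF z] .
  have "gd r z \<le> gd r w + gd w z" using gd_tri[OF r w zV] .
  moreover have "gd r w \<le> gd r z + gd z w" using gd_tri[OF r zV w] .
  moreover have "gd z w = gd w z" using gd_sym[OF w zV] .
  ultimately show ?thesis using 1 by linarith
qed

fun nbw :: "nat \<Rightarrow> nat option \<Rightarrow> nat list \<Rightarrow> bool" where
  "nbw v ip [] = True"
| "nbw v ip (p # ps) = (p < deg v \<and> ip \<noteq> Some p \<and> nbw (nbr v p) (Some (bk v p)) ps)"

lemma nbw_take: "nbw v ip ps \<Longrightarrow> nbw v ip (take j ps)"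
  by (induction ps arbitrary: v ip j) (auto simp: take_Cons split: nat.splits)

lemma sw_tail: "v \<in> V \<Longrightarrow> we v (p # ps) = Some z \<Longrightarrow> length (p # ps) = gd v z \<Longrightarrow>
   p < deg v \<and> we (nbr v p) ps = Some z \<and> gd (nbr v p) z = length ps"
proof -
  assume v: "v \<in> V" and w: "we v (p # ps) = Some z" and l: "length (p # ps) = gd v z"
  then have p: "p < deg v" and w': "we (nbr v p) ps = Some z" by (auto split: if_splits)
  have a: "gd (nbr v p) z \<le> length ps" using gd_le[OF w'] .
  obtain qs where q: "length qs = gd (nbr v p) z" "we (nbr v p) qs = Some z" using gd_ex[OF w'] by blast
  have "we v (p # qs) = Some z" using q p by simp
  then have "gd v z \<le> Suc (gd (nbr v p) z)" using gd_le q by fastforce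
  then show ?thesis using a l p w' by simp
qed

lemma sw_nbw: "v \<in> V \<Longrightarrow> we v ps = Some z \<Longrightarrow> length ps = gd v z \<Longrightarrow>
   (case ps of [] \<Rightarrow> True | p # _ \<Rightarrow> ip \<noteq> Some p) \<Longrightarrow> nbw v ip ps"
proof (induction ps arbitrary: v ip)
  case Nil then show ?case by simp
next
  case (Cons p ps)
  from sw_tail[OF Cons.prems(1-3)] have p: "p < deg v" and w': "we (nbr v p) ps = Some z"
    and l: "gd (nbr v p) z = length ps" by auto
  have V': "nbr v p \<in> V" and nn: "nbr (nbr v p) (bk v p) = v" using pgD[OF Cons.prems(1) p] by auto
  have "case ps of [] \<Rightarrow> True | e # _ \<Rightarrow> Some (bk v p) \<noteq> Some e"
  proof (cases ps)
    case (Cons e ps')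
    show ?thesis
    proof (rule ccontr)
      assume "\<not> ?thesis"
      then have e: "e = bk v p" using Cons by simp
      have "we v ps' = Some z" using w' Cons e nn by (auto split: if_splits)
      then have "gd v z \<le> length ps'" using gd_le by blast
      then show False using Cons.prems(3) Cons by simp
    qed
  qed simp
  then have "nbw (nbr v p) (Some (bk v p)) ps" using Cons.IH[OF V' w' l[symmetric]] by blast
  then show ?case using p Cons.prems(4) by simp
qed

lemma sw_take: "v \<in> V \<Longrightarrow> we v ps = Some z \<Longrightarrow> length ps = gd v z \<Longrightarrow> j \<le> length ps \<Longrightarrow>
   \<exists>y. we v (take j ps) = Some y \<and> we y (drop j ps) = Some z \<and> gd y z = length ps - j \<and> y \<in> V"
proof (induction j arbitrary: v ps)
  case 0 then show ?case by simp
next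
  case (Suc j)
  then obtain p ps' where ps: "ps = p # ps'" by (cases ps) auto
  from sw_tail[OF Suc.prems(1) Suc.prems(2)[unfolded ps] Suc.prems(3)[unfolded ps]]
  have p: "p < deg v" and w': "we (nbr v p) ps' = Some z" and l: "gd (nbr v p) z = length ps'" by auto
  have V': "nbr v p \<in> V" using pgD[OF Suc.prems(1) p] by auto
  from Suc.IH[OF V' w' l[symmetric]] Suc.prems(4) ps obtain y where
    "we (nbr v p) (take j ps') = Some y \<and> we y (drop j ps') = Some z \<and> gd y z = length ps' - j \<and> y \<in> V"
    by auto
  then show ?case using ps p by auto
qed

end



abbreviation mk :: "mode \<Rightarrow> nat list \<Rightarrow> nat list \<Rightarrow> bool \<Rightarrow> bool \<Rightarrow> rstate" where
  "mk M ws cs f b \<equiv> \<lparr>rmode = M, wstk = ws, cstk = cs, found = f, blk = b\<rparr>"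

definition Pset :: "nat \<Rightarrow> nat option \<Rightarrow> nat \<Rightarrow> nat set" where
  "Pset dg ip j = {q. j \<le> q \<and> q < dg \<and> ip \<noteq> Some q}"

lemma Pset_fin[simp]: "finite (Pset dg ip j)"
  unfolding Pset_def by (rule finite_subset[of _ "{..<dg}"]) auto

lemma np_none: "next_port dg ip j = None \<Longrightarrow> Pset dg ip j = {}"
  unfolding next_port_def Pset_def by (auto split: if_splits)

lemma np_some: "next_port dg ip j = Some q \<Longrightarrow>
   j \<le> q \<and> q < dg \<and> ip \<noteq> Some q \<and> Pset dg ip j = insert q (Pset dg ip (Suc q)) \<and> q \<notin> Pset dg ip (Suc q)"
proof -
  assume a: "next_port dg ip j = Some q"
  then have ex: "\<exists>q. j \<le> q \<and> q < dg \<and> ip \<noteq> Some q" and qd: "q = (LEAST q. j \<le> q \<and> q < dg \<and> ip \<noteq> Some q)"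
    unfolding next_port_def by (auto split: if_splits)
  have q: "j \<le> q \<and> q < dg \<and> ip \<noteq> Some q" using LeastI_ex[OF ex] qd by simp
  have m: "q \<le> q'" if "j \<le> q' \<and> q' < dg \<and> ip \<noteq> Some q'" for q'
    unfolding qd by (rule Least_le) (rule that)
  have e: "Pset dg ip j = insert q (Pset dg ip (Suc q))"
  proof (rule set_eqI)
    fix x
    show "x \<in> Pset dg ip j \<longleftrightarrow> x \<in> insert q (Pset dg ip (Suc q))"
      using q m[of x] unfolding Pset_def by auto
  qed
  show ?thesis using q e unfolding Pset_def by auto
qed

lemma c_ret_cons: "c_ret (mk M ws (e # cs) f b) = (mk CB ws cs f b, Move e)"
  by (simp add: c_ret_def)
lemma c_ret_nil: "c_ret (mk M ws [] f b) = w_ret (mk M ws [] (f \<or> \<not> b) False)"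
  by (simp add: c_ret_def)
lemma w_ret_cons: "w_ret (mk M (e # ws) cs f b) = (mk WB ws cs f b, Move e)"
  by (simp add: w_ret_def)
lemma w_ret_nil: "w_ret (mk M [] cs f b) = (mk M [] cs f b, Halt (if f then AnsA else AnsB))"
  by (simp add: w_ret_def)
lemma c_try_none: "next_port dg (top_port cs) j = None \<Longrightarrow> c_try (mk M ws cs f b) dg j = c_ret (mk M ws cs f b)"
  by (simp add: c_try_def)
lemma c_try_some: "next_port dg (top_port cs) j = Some q \<Longrightarrow> c_try (mk M ws cs f b) dg j = (mk CF ws cs f b, Move q)"
  by (simp add: c_try_def)
lemma w_try_none: "next_port dg (top_port ws) j = None \<Longrightarrow> w_try (mk M ws cs f b) dg j = w_ret (mk M ws cs f b)"
  by (simp add: w_try_def)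
lemma w_try_some: "next_port dg (top_port ws) j = Some q \<Longrightarrow> w_try (mk M ws cs f b) dg j = (mk WF ws cs f b, Move q)"
  by (simp add: w_try_def)

lemma bitlen_small: "n < 2 \<Longrightarrow> bitlen n = 1"
  by (subst bitlen.simps) simp
lemma bitlen_big: "\<not> n < 2 \<Longrightarrow> bitlen n = Suc (bitlen (n div 2))"
  by (subst bitlen.simps) simp

lemma bitlen_mono: "a \<le> b \<Longrightarrow> bitlen a \<le> bitlen b"
proof (induction b arbitrary: a rule: less_induct)
  case (less b)
  show ?case
  proof (cases "b < 2")
    case True then show ?thesis using less.prems by (simp add: bitlen_small)
  next
    case False
    show ?thesis
    proof (cases "a < 2")
      case True then show ?thesis using False by (simp add: bitlen_small bitlen_big)
    next
      case F2: False
      have "bitlen (a div 2) \<le> bitlen (b div 2)" using less.IH[of "b div 2" "a div 2"] less.prems False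
        by (simp add: div_le_mono)
      then show ?thesis using False F2 by (simp add: bitlen_big)
    qed
  qed
qed

lemma sum_list_le: "(\<forall>x\<in>set xs. f x \<le> (K::nat)) \<Longrightarrow> sum_list (map f xs) \<le> length xs * K"
  by (induction xs) auto

locale aobl = pgr V deg nbr bk for V deg nbr bk +
  fixes col :: "nat \<Rightarrow> bool" and d1 Dl :: nat
  assumes d1: "2 \<le> d1" and degle: "\<And>v. v \<in> V \<Longrightarrow> deg v \<le> Dl"
begin

definition act :: "nat \<times> nat option \<times> rstate \<Rightarrow> rstate \<times> answer action" where
  "act c = (case c of (v, e, s) \<Rightarrow> aob_robot d1 s (deg v) (col v) e)"
definition good :: "nat \<times> nat option \<times> rstate \<Rightarrow> bool" where
  "good c = (case c of (v, e, s) \<Rightarrow> \<exists>s' p. aob_robot d1 s (deg v) (col v) e = (s', Move p) \<and> p < deg v)"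
abbreviation stp where "stp \<equiv> robot_step deg nbr bk col (aob_robot d1)"
definition Bd :: nat where "Bd = 6 + 4 * d1 * bitlen Dl"
definition exec where
  "exec c m c' \<longleftrightarrow> (stp ^^ m) c = c' \<and> (\<forall>i<m. good ((stp ^^ i) c)) \<and>
     (\<forall>i. 0 < i \<and> i \<le> m \<longrightarrow> state_bits (snd (snd ((stp ^^ i) c))) \<le> Bd)"

lemma fp: "(f ^^ (m + j)) x = (f ^^ j) ((f ^^ m) x)"
  by (metis add.commute comp_apply funpow_add)

lemma exec_0: "exec c 0 c" unfolding exec_def by simp

lemma exec_trans: "exec c m1 c1 \<Longrightarrow> exec c1 m2 c2 \<Longrightarrow> exec c (m1 + m2) c2"
  unfolding exec_def
proof (intro conjI allI impI)
  assume a: "(stp ^^ m1) c = c1 \<and> (\<forall>i<m1. good ((stp ^^ i) c)) \<and>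
    (\<forall>i. 0 < i \<and> i \<le> m1 \<longrightarrow> state_bits (snd (snd ((stp ^^ i) c))) \<le> Bd)"
    and b: "(stp ^^ m2) c1 = c2 \<and> (\<forall>i<m2. good ((stp ^^ i) c1)) \<and>
    (\<forall>i. 0 < i \<and> i \<le> m2 \<longrightarrow> state_bits (snd (snd ((stp ^^ i) c1))) \<le> Bd)"
  show "(stp ^^ (m1 + m2)) c = c2" using a b fp by metis
  fix i
  { assume "i < m1 + m2"
    show "good ((stp ^^ i) c)"
    proof (cases "i < m1")
      case True then show ?thesis using a by blast
    next
      case False
      then have "i = m1 + (i - m1)" by simp
      then have "(stp ^^ i) c = (stp ^^ (i - m1)) c1" using fp a by metis
      then show ?thesis using b \<open>i < m1 + m2\<close> False by auto
    qed }
  { assume i: "0 < i \<and> i \<le> m1 + m2"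
    show "state_bits (snd (snd ((stp ^^ i) c))) \<le> Bd"
    proof (cases "i \<le> m1")
      case True then show ?thesis using a i by blast
    next
      case False
      then have "i = m1 + (i - m1)" by simp
      then have "(stp ^^ i) c = (stp ^^ (i - m1)) c1" using fp a by metis
      then show ?thesis using b i False by auto
    qed }
qed

lemma exec_step: "act (v, e, s) = (s', Move p) \<Longrightarrow> p < deg v \<Longrightarrow> state_bits s' \<le> Bd \<Longrightarrow>
   exec (v, e, s) 1 (nbr v p, Some (bk v p), s')"
proof -
  assume a: "act (v, e, s) = (s', Move p)" "p < deg v" "state_bits s' \<le> Bd"
  have st: "stp (v, e, s) = (nbr v p, Some (bk v p), s')" using a by (simp add: robot_step_def act_def)
  show ?thesis unfolding exec_def using st a by (auto simp: good_def act_def le_Suc_eq)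
qed

lemma bits_ok: "length ws \<le> d1 \<Longrightarrow> length cs \<le> d1 \<Longrightarrow> \<forall>p\<in>set (ws @ cs). p \<le> Dl \<Longrightarrow>
   state_bits (mk M ws cs f b) \<le> Bd"
proof -
  assume l1: "length ws \<le> d1" and l2: "length cs \<le> d1" and p: "\<forall>p\<in>set (ws @ cs). p \<le> Dl"
  have "sum_list (map (\<lambda>p. 2 * bitlen p) (ws @ cs)) \<le> length (ws @ cs) * (2 * bitlen Dl)"
    using p bitlen_mono by (intro sum_list_le) auto
  also have "\<dots> \<le> (2 * d1) * (2 * bitlen Dl)" using l1 l2 by (intro mult_right_mono) auto
  finally show ?thesis unfolding state_bits_def Bd_def by simp
qed

fun cB :: "nat \<Rightarrow> nat \<Rightarrow> nat option \<Rightarrow> bool" where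
  "cB 0 u ip = col u"
| "cB (Suc r) u ip = (col u \<or> (\<exists>q\<in>Pset (deg u) ip 0. cB r (nbr u q) (Some (bk u q))))"

fun cN :: "nat \<Rightarrow> nat \<Rightarrow> nat option \<Rightarrow> nat" where
  "cN 0 u ip = 0"
| "cN (Suc r) u ip = (if col u then 0 else (\<Sum>q\<in>Pset (deg u) ip 0. 2 + cN r (nbr u q) (Some (bk u q))))"

definition CS where
  "CS r \<longleftrightarrow> (\<forall>u c M ws cs f b. u \<in> V \<longrightarrow> fst c = u \<longrightarrow> act c = c_node d1 (mk M ws cs f b) (deg u) (col u) \<longrightarrow>
     length cs + r = d1 - 1 \<longrightarrow> length ws \<le> d1 \<longrightarrow> (\<forall>p\<in>set (ws @ cs). p \<le> Dl) \<longrightarrow>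
     (\<exists>c' M'. exec c (cN r u (top_port cs)) c' \<and> fst c' = u \<and>
        act c' = c_ret (mk M' ws cs f (b \<or> cB r u (top_port cs)))))"

end


context aobl begin
lemma cloop:
  assumes IH: "CS r" and u: "u \<in> V" and lc: "length cs + Suc r = d1 - 1" and lw: "length ws \<le> d1"
    and pl: "\<forall>p\<in>set (ws @ cs). p \<le> Dl"
  shows "n = deg u - j \<Longrightarrow> fst c = u \<Longrightarrow> act c = c_try (mk M ws cs f b) (deg u) j \<Longrightarrow>
   \<exists>c' M'. exec c (\<Sum>q\<in>Pset (deg u) (top_port cs) j. 2 + cN r (nbr u q) (Some (bk u q))) c' \<and> fst c' = u \<and>
     act c' = c_ret (mk M' ws cs f (b \<or> (\<exists>q\<in>Pset (deg u) (top_port cs) j. cB r (nbr u q) (Some (bk u q)))))"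
proof (induction n arbitrary: j c M f b rule: less_induct)
  case (less n)
  show ?case
  proof (cases "next_port (deg u) (top_port cs) j")
    case None
    have "act c = c_ret (mk M ws cs f b)" using less.prems(3) c_try_none[OF None] by simp
    then show ?thesis using less.prems(2) np_none[OF None]
      by (intro exI[of _ c] exI[of _ M] conjI) (simp_all add: exec_0)
  next
    case (Some q)
    note q = np_some[OF Some]
    let ?ch = "nbr u q" and ?e = "bk u q"
    have g: "?ch \<in> V" "?e < deg ?ch" "nbr ?ch ?e = u" "bk ?ch ?e = q" using pgD[OF u] q by auto
    obtain e0 s0 where c: "c = (u, e0, s0)" using less.prems(2) by (cases c) auto
    have a0: "act c = (mk CF ws cs f b, Move q)" using less.prems(3) c_try_some[OF Some] by simp
    have bits1: "state_bits (mk CF ws cs f b) \<le> Bd" using bits_ok lc lw pl by simp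
    have ex1: "exec c 1 (?ch, Some ?e, mk CF ws cs f b)" using exec_step[OF a0[unfolded c]] q bits1 c by simp
    have a1: "act (?ch, Some ?e, mk CF ws cs f b) = c_node d1 (mk CF ws (?e # cs) f b) (deg ?ch) (col ?ch)"
      by (simp add: act_def aob_robot_def push_def)
    have pl2: "\<forall>p\<in>set (ws @ ?e # cs). p \<le> Dl" using pl g(1,2) degle[OF g(1)] by auto
    obtain c2 M2 where c2: "exec (?ch, Some ?e, mk CF ws cs f b) (cN r ?ch (Some ?e)) c2" "fst c2 = ?ch"
      "act c2 = c_ret (mk M2 ws (?e # cs) f (b \<or> cB r ?ch (Some ?e)))"
      using IH[unfolded CS_def, rule_format, OF g(1) _ a1] lc lw pl2 by (auto simp: top_port_def)
    obtain e2 s2 where c2e: "c2 = (?ch, e2, s2)" using c2(2) by (cases c2) auto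
    let ?b' = "b \<or> cB r ?ch (Some ?e)"
    have a2: "act c2 = (mk CB ws cs f ?b', Move ?e)" using c2(3) c_ret_cons by simp
    have bits2: "state_bits (mk CB ws cs f ?b') \<le> Bd" using bits_ok lc lw pl by simp
    have ex2: "exec c2 1 (u, Some q, mk CB ws cs f ?b')"
      using exec_step[OF a2[unfolded c2e]] g bits2 c2e by simp
    have a3: "act (u, Some q, mk CB ws cs f ?b') = c_try (mk CB ws cs f ?b') (deg u) (Suc q)"
      by (simp add: act_def aob_robot_def)
    have lt: "deg u - Suc q < n" using less.prems(1) q by linarith
    obtain c' M' where c': "exec (u, Some q, mk CB ws cs f ?b')
       (\<Sum>q\<in>Pset (deg u) (top_port cs) (Suc q). 2 + cN r (nbr u q) (Some (bk u q))) c'" "fst c' = u"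
      "act c' = c_ret (mk M' ws cs f (?b' \<or> (\<exists>q\<in>Pset (deg u) (top_port cs) (Suc q). cB r (nbr u q) (Some (bk u q)))))"
      using less.IH[OF lt refl _ a3] by auto
    have ex: "exec c (1 + cN r ?ch (Some ?e) + 1 + (\<Sum>q\<in>Pset (deg u) (top_port cs) (Suc q). 2 + cN r (nbr u q) (Some (bk u q)))) c'"
      by (rule exec_trans[OF exec_trans[OF exec_trans[OF ex1 c2(1)] ex2] c'(1)])
    have sm: "(\<Sum>q\<in>Pset (deg u) (top_port cs) j. 2 + cN r (nbr u q) (Some (bk u q))) =
       1 + cN r ?ch (Some ?e) + 1 + (\<Sum>q\<in>Pset (deg u) (top_port cs) (Suc q). 2 + cN r (nbr u q) (Some (bk u q)))"
      using q by simp
    have bb: "(?b' \<or> (\<exists>q\<in>Pset (deg u) (top_port cs) (Suc q). cB r (nbr u q) (Some (bk u q)))) =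
       (b \<or> (\<exists>q\<in>Pset (deg u) (top_port cs) j. cB r (nbr u q) (Some (bk u q))))"
      using q by auto
    show ?thesis unfolding sm bb[symmetric] using ex c'(2,3) by blast
  qed
qed

lemma csearch: "CS r"
proof (induction r)
  case 0
  show ?case unfolding CS_def
  proof (intro allI impI)
    fix u c M ws cs f b
    assume "fst c = u" "act c = c_node d1 (mk M ws cs f b) (deg u) (col u)" "length cs + 0 = d1 - 1"
    then have "act c = c_ret (mk M ws cs f (b \<or> cB 0 u (top_port cs)))"
      by (cases "col u") (auto simp: c_node_def)
    then show "\<exists>c' M'. exec c (cN 0 u (top_port cs)) c' \<and> fst c' = u \<and>
        act c' = c_ret (mk M' ws cs f (b \<or> cB 0 u (top_port cs)))"
      using \<open>fst c = u\<close> by (intro exI[of _ c] exI[of _ M] conjI) (simp_all add: exec_0)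
  qed
next
  case (Suc r)
  show ?case unfolding CS_def
  proof (intro allI impI)
    fix u c M ws cs f b
    assume u: "u \<in> V" and c: "fst c = u" and a: "act c = c_node d1 (mk M ws cs f b) (deg u) (col u)"
      and lc: "length cs + Suc r = d1 - 1" and lw: "length ws \<le> d1" and pl: "\<forall>p\<in>set (ws @ cs). p \<le> Dl"
    show "\<exists>c' M'. exec c (cN (Suc r) u (top_port cs)) c' \<and> fst c' = u \<and>
        act c' = c_ret (mk M' ws cs f (b \<or> cB (Suc r) u (top_port cs)))"
    proof (cases "col u")
      case True
      then have "act c = c_ret (mk M ws cs f (b \<or> cB (Suc r) u (top_port cs)))"
        using a by (auto simp: c_node_def)
      then show ?thesis using c True by (intro exI[of _ c] exI[of _ M] conjI) (simp_all add: exec_0)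
    next
      case False
      then have a': "act c = c_try (mk M ws cs f b) (deg u) 0" using a lc by (simp add: c_node_def)
      show ?thesis using cloop[OF Suc u lc lw pl refl c a'] False by simp
    qed
  qed
qed

end


context aobl begin

fun wF :: "nat \<Rightarrow> nat \<Rightarrow> nat option \<Rightarrow> bool" where
  "wF 0 v ip = (\<not> col v \<and> \<not> cB (d1 - 1) v None)"
| "wF (Suc r) v ip = (if col v \<and> ip \<noteq> None then False
     else \<exists>q\<in>Pset (deg v) ip 0. wF r (nbr v q) (Some (bk v q)))"

fun wN :: "nat \<Rightarrow> nat \<Rightarrow> nat option \<Rightarrow> nat" where
  "wN 0 v ip = (if col v then 0 else cN (d1 - 1) v None)"
| "wN (Suc r) v ip = (if col v \<and> ip \<noteq> None then 0
     else (\<Sum>q\<in>Pset (deg v) ip 0. 2 + wN r (nbr v q) (Some (bk v q))))"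

definition WS where
  "WS r \<longleftrightarrow> (\<forall>v ip ws f. v \<in> V \<longrightarrow> length (push ip ws) + r = d1 \<longrightarrow> (ip = None \<longrightarrow> ws = []) \<longrightarrow>
     (\<forall>p\<in>set ws. p \<le> Dl) \<longrightarrow> (\<forall>p. ip = Some p \<longrightarrow> p < deg v) \<longrightarrow>
     (\<exists>c' M'. exec (v, ip, mk WF ws [] f False) (wN r v ip) c' \<and> fst c' = v \<and>
        act c' = w_ret (mk M' (push ip ws) [] (f \<or> wF r v ip) False)))"

lemma wloop:
  assumes IH: "WS r" and v: "v \<in> V" and lw: "length ws + Suc r = d1"
    and pl: "\<forall>p\<in>set ws. p \<le> Dl"
  shows "n = deg v - j \<Longrightarrow> fst c = v \<Longrightarrow> act c = w_try (mk M ws [] f False) (deg v) j \<Longrightarrow>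
   \<exists>c' M'. exec c (\<Sum>q\<in>Pset (deg v) (top_port ws) j. 2 + wN r (nbr v q) (Some (bk v q))) c' \<and> fst c' = v \<and>
     act c' = w_ret (mk M' ws [] (f \<or> (\<exists>q\<in>Pset (deg v) (top_port ws) j. wF r (nbr v q) (Some (bk v q)))) False)"
proof (induction n arbitrary: j c M f rule: less_induct)
  case (less n)
  show ?case
  proof (cases "next_port (deg v) (top_port ws) j")
    case None
    have "act c = w_ret (mk M ws [] f False)" using less.prems(3) w_try_none[OF None] by simp
    then show ?thesis using less.prems(2) np_none[OF None]
      by (intro exI[of _ c] exI[of _ M] conjI) (simp_all add: exec_0)
  next
    case (Some q)
    note q = np_some[OF Some]
    let ?ch = "nbr v q" and ?e = "bk v q"
    have g: "?ch \<in> V" "?e < deg ?ch" "nbr ?ch ?e = v" "bk ?ch ?e = q" using pgD[OF v] q by auto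
    obtain e0 s0 where c: "c = (v, e0, s0)" using less.prems(2) by (cases c) auto
    have a0: "act c = (mk WF ws [] f False, Move q)" using less.prems(3) w_try_some[OF Some] by simp
    have bits1: "state_bits (mk WF ws [] f False) \<le> Bd" using bits_ok lw pl by simp
    have ex1: "exec c 1 (?ch, Some ?e, mk WF ws [] f False)" using exec_step[OF a0[unfolded c]] q bits1 c by simp
    have "\<exists>c' M'. exec (?ch, Some ?e, mk WF ws [] f False) (wN r ?ch (Some ?e)) c' \<and> fst c' = ?ch \<and>
        act c' = w_ret (mk M' (push (Some ?e) ws) [] (f \<or> wF r ?ch (Some ?e)) False)"
      apply (rule IH[unfolded WS_def, rule_format])
      using g lw pl by (simp_all add: push_def)
    then obtain c2 M2 where c2: "exec (?ch, Some ?e, mk WF ws [] f False) (wN r ?ch (Some ?e)) c2" "fst c2 = ?ch"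
      "act c2 = w_ret (mk M2 (?e # ws) [] (f \<or> wF r ?ch (Some ?e)) False)"
      unfolding push_def by auto
    obtain e2 s2 where c2e: "c2 = (?ch, e2, s2)" using c2(2) by (cases c2) auto
    let ?f' = "f \<or> wF r ?ch (Some ?e)"
    have a2: "act c2 = (mk WB ws [] ?f' False, Move ?e)" using c2(3) w_ret_cons by simp
    have bits2: "state_bits (mk WB ws [] ?f' False) \<le> Bd" using bits_ok lw pl by simp
    have ex2: "exec c2 1 (v, Some q, mk WB ws [] ?f' False)"
      using exec_step[OF a2[unfolded c2e]] g bits2 c2e by simp
    have a3: "act (v, Some q, mk WB ws [] ?f' False) = w_try (mk WB ws [] ?f' False) (deg v) (Suc q)"
      by (simp add: act_def aob_robot_def)
    have lt: "deg v - Suc q < n" using less.prems(1) q by linarith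
    obtain c' M' where c': "exec (v, Some q, mk WB ws [] ?f' False)
       (\<Sum>q\<in>Pset (deg v) (top_port ws) (Suc q). 2 + wN r (nbr v q) (Some (bk v q))) c'" "fst c' = v"
      "act c' = w_ret (mk M' ws [] (?f' \<or> (\<exists>q\<in>Pset (deg v) (top_port ws) (Suc q). wF r (nbr v q) (Some (bk v q)))) False)"
      using less.IH[OF lt refl _ a3] by auto
    have ex: "exec c (1 + wN r ?ch (Some ?e) + 1 + (\<Sum>q\<in>Pset (deg v) (top_port ws) (Suc q). 2 + wN r (nbr v q) (Some (bk v q)))) c'"
      by (rule exec_trans[OF exec_trans[OF exec_trans[OF ex1 c2(1)] ex2] c'(1)])
    have sm: "(\<Sum>q\<in>Pset (deg v) (top_port ws) j. 2 + wN r (nbr v q) (Some (bk v q))) =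
       1 + wN r ?ch (Some ?e) + 1 + (\<Sum>q\<in>Pset (deg v) (top_port ws) (Suc q). 2 + wN r (nbr v q) (Some (bk v q)))"
      using q by simp
    have bb: "(?f' \<or> (\<exists>q\<in>Pset (deg v) (top_port ws) (Suc q). wF r (nbr v q) (Some (bk v q)))) =
       (f \<or> (\<exists>q\<in>Pset (deg v) (top_port ws) j. wF r (nbr v q) (Some (bk v q))))"
      using q by auto
    show ?thesis unfolding sm bb[symmetric] using ex c'(2,3) by blast
  qed
qed

lemma wsearch: "WS r"
proof (induction r)
  case 0
  show ?case unfolding WS_def
  proof (intro allI impI)
    fix v ip ws f
    assume v: "v \<in> V" and l: "length (push ip ws) + 0 = d1" and rt: "ip = None \<longrightarrow> ws = []"
      and pl: "\<forall>p\<in>set ws. p \<le> Dl" and ipd: "\<forall>p. ip = Some p \<longrightarrow> p < deg v"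
    let ?c = "(v, ip, mk WF ws [] f False)"
    let ?ws = "push ip ws"
    show "\<exists>c' M'. exec ?c (wN 0 v ip) c' \<and> fst c' = v \<and>
        act c' = w_ret (mk M' ?ws [] (f \<or> wF 0 v ip) False)"
    proof (cases "col v")
      case True
      have "act ?c = w_ret (mk WF ?ws [] (f \<or> wF 0 v ip) False)"
        using True l by (simp add: act_def aob_robot_def Let_def)
      then show ?thesis using True by (intro exI[of _ ?c] exI[of _ WF] conjI) (simp_all add: exec_0)
    next
      case False
      have a: "act ?c = c_node d1 (mk WF ?ws [] f False) (deg v) (col v)"
        using False l by (simp add: act_def aob_robot_def Let_def)
      have pl2: "\<forall>p\<in>set (?ws @ []). p \<le> Dl" using pl ipd degle[OF v] by (auto simp: push_def split: option.splits)
      obtain c2 M2 where c2: "exec ?c (cN (d1 - 1) v None) c2" "fst c2 = v"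
        "act c2 = c_ret (mk M2 ?ws [] f (False \<or> cB (d1 - 1) v None))"
        using csearch[unfolded CS_def, rule_format, OF v _ a] l pl2 by (auto simp: top_port_def)
      have "act c2 = w_ret (mk M2 ?ws [] (f \<or> wF 0 v ip) False)" using c2(3) False by (simp add: c_ret_nil)
      then show ?thesis using c2(1,2) False by (intro exI[of _ c2] exI[of _ M2] conjI) simp_all
    qed
  qed
next
  case (Suc r)
  show ?case unfolding WS_def
  proof (intro allI impI)
    fix v ip ws f
    assume v: "v \<in> V" and l: "length (push ip ws) + Suc r = d1" and rt: "ip = None \<longrightarrow> ws = []"
      and pl: "\<forall>p\<in>set ws. p \<le> Dl" and ipd: "\<forall>p. ip = Some p \<longrightarrow> p < deg v"
    let ?c = "(v, ip, mk WF ws [] f False)"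
    let ?ws = "push ip ws"
    have k0: "(length ?ws \<noteq> 0) = (ip \<noteq> None)" using rt by (auto simp: push_def split: option.splits)
    have tp: "top_port ?ws = ip" using rt by (auto simp: push_def top_port_def split: option.splits)
    show "\<exists>c' M'. exec ?c (wN (Suc r) v ip) c' \<and> fst c' = v \<and>
        act c' = w_ret (mk M' ?ws [] (f \<or> wF (Suc r) v ip) False)"
    proof (cases "col v \<and> ip \<noteq> None")
      case True
      have "act ?c = w_ret (mk WF ?ws [] (f \<or> wF (Suc r) v ip) False)"
        using True l k0 by (simp add: act_def aob_robot_def Let_def)
      then show ?thesis using True by (intro exI[of _ ?c] exI[of _ WF] conjI) (simp_all add: exec_0)
    next
      case False
      have ne: "length ?ws \<noteq> d1" using l by simp
      have nb: "\<not> (col v \<and> length ?ws \<noteq> 0)" using False k0 by simp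
      have a: "act ?c = w_try (mk WF ?ws [] f False) (deg v) 0"
        using ne nb unfolding act_def aob_robot_def Let_def by auto
      have pl2: "\<forall>p\<in>set ?ws. p \<le> Dl" using pl ipd degle[OF v] by (auto simp: push_def split: option.splits)
      have l2: "length ?ws + Suc r = d1" using l .
      have e1: "wN (Suc r) v ip = (\<Sum>q\<in>Pset (deg v) ip 0. 2 + wN r (nbr v q) (Some (bk v q)))"
        by (simp only: wN.simps if_not_P[OF False])
      have e2: "wF (Suc r) v ip = (\<exists>q\<in>Pset (deg v) ip 0. wF r (nbr v q) (Some (bk v q)))"
        by (simp only: wF.simps if_not_P[OF False])
      have fc: "fst ?c = v" by simp
      show ?thesis unfolding e1 e2 using wloop[OF Suc v l2 pl2 refl fc a, unfolded tp] by blast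
    qed
  qed
qed

end



lemma key_ineq: "(D::nat) \<ge> 2 \<Longrightarrow> Y \<ge> 2 \<Longrightarrow> D * (Y - 2) + 4 \<le> D * Y"
proof -
  assume D: "D \<ge> 2" and Y: "Y \<ge> 2"
  have "D * (Y - 2) + D * 2 = D * Y" using Y by (metis add_mult_distrib2 le_add_diff_inverse2)
  then show ?thesis using D by linarith
qed

lemma sum_le_DK: "card A \<le> D \<Longrightarrow> (\<And>x. x \<in> A \<Longrightarrow> g x \<le> (K::nat)) \<Longrightarrow> sum g A \<le> D * K"
proof -
  assume c: "card A \<le> D" and g: "\<And>x. x \<in> A \<Longrightarrow> g x \<le> K"
  have "sum g A \<le> card A * K" using sum_bounded_above[of A g K] g by simp
  also have "\<dots> \<le> D * K" using c by (rule mult_right_mono) simp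
  finally show ?thesis .
qed

context aobl begin

lemma card_P: "u \<in> V \<Longrightarrow> card (Pset (deg u) ip 0) \<le> Dl"
proof -
  assume u: "u \<in> V"
  have "card (Pset (deg u) ip 0) \<le> card {..<deg u}"
    by (rule card_mono) (auto simp: Pset_def)
  then show ?thesis using degle[OF u] by simp
qed

lemma cN_bound: "u \<in> V \<Longrightarrow> 2 \<le> Dl \<Longrightarrow> cN k u ip + 4 \<le> 4 * Dl ^ k"
proof (induction k arbitrary: u ip)
  case 0 then show ?case by simp
next
  case (Suc k)
  show ?case
  proof (cases "col u")
    case True
    have "1 \<le> Dl ^ Suc k" using Suc.prems by simp
    then show ?thesis using True by simp
  next
    case False
    have t: "2 + cN k (nbr u q) (Some (bk u q)) \<le> 4 * Dl ^ k - 2" if "q \<in> Pset (deg u) ip 0" for q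
    proof -
      have "q < deg u" using that by (simp add: Pset_def)
      then have "nbr u q \<in> V" using pgD[OF Suc.prems(1)] by blast
      then show ?thesis using Suc.IH[of "nbr u q" "Some (bk u q)"] Suc.prems(2) by linarith
    qed
    have e: "cN (Suc k) u ip = (\<Sum>q\<in>Pset (deg u) ip 0. 2 + cN k (nbr u q) (Some (bk u q)))"
      by (simp only: cN.simps if_not_P[OF False])
    have s: "cN (Suc k) u ip \<le> Dl * (4 * Dl ^ k - 2)"
      unfolding e by (rule sum_le_DK[OF card_P[OF Suc.prems(1)] t])
    have "1 \<le> Dl ^ k" using Suc.prems by simp
    then have y: "4 * Dl ^ k \<ge> 2" by linarith
    have "Dl * (4 * Dl ^ k - 2) + 4 \<le> Dl * (4 * Dl ^ k)" by (rule key_ineq[OF Suc.prems(2) y])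
    moreover have "4 * Dl ^ Suc k = Dl * (4 * Dl ^ k)" by simp
    ultimately show ?thesis using s by linarith
  qed
qed

lemma wN_bound: "v \<in> V \<Longrightarrow> 2 \<le> Dl \<Longrightarrow> wN k v ip + 4 \<le> (4 * Dl ^ (d1 - 1) + 4) * Dl ^ k"
proof (induction k arbitrary: v ip)
  case 0
  then show ?case using cN_bound[OF 0(1,2), of "d1 - 1" None] by simp
next
  case (Suc k)
  let ?K = "4 * Dl ^ (d1 - 1) + 4"
  show ?case
  proof (cases "col v \<and> ip \<noteq> None")
    case True
    have "4 \<le> ?K" by simp
    also have "\<dots> \<le> ?K * Dl ^ Suc k" using Suc.prems by simp
    finally show ?thesis using True by simp
  next
    case False
    have t: "2 + wN k (nbr v q) (Some (bk v q)) \<le> ?K * Dl ^ k - 2" if "q \<in> Pset (deg v) ip 0" for q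
    proof -
      have "q < deg v" using that by (simp add: Pset_def)
      then have "nbr v q \<in> V" using pgD[OF Suc.prems(1)] by blast
      then show ?thesis using Suc.IH[of "nbr v q" "Some (bk v q)"] Suc.prems(2) by linarith
    qed
    have e: "wN (Suc k) v ip = (\<Sum>q\<in>Pset (deg v) ip 0. 2 + wN k (nbr v q) (Some (bk v q)))"
      by (simp only: wN.simps if_not_P[OF False])
    have s: "wN (Suc k) v ip \<le> Dl * (?K * Dl ^ k - 2)"
      unfolding e by (rule sum_le_DK[OF card_P[OF Suc.prems(1)] t])
    have "1 \<le> Dl ^ k" using Suc.prems by simp
    then have "?K \<le> ?K * Dl ^ k" by simp
    then have y: "?K * Dl ^ k \<ge> 2" by linarith
    have "Dl * (?K * Dl ^ k - 2) + 4 \<le> Dl * (?K * Dl ^ k)" by (rule key_ineq[OF Suc.prems(2) y])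
    moreover have "?K * Dl ^ Suc k = Dl * (?K * Dl ^ k)" by simp
    ultimately show ?thesis using s by linarith
  qed
qed

lemma n_bound: "v \<in> V \<Longrightarrow> 2 \<le> Dl \<Longrightarrow> wN d1 v ip \<le> 8 * Dl ^ (2 * d1 - 1)"
proof -
  assume v: "v \<in> V" and D: "2 \<le> Dl"
  have a: "wN d1 v ip \<le> (4 * Dl ^ (d1 - 1) + 4) * Dl ^ d1" using wN_bound[OF v D, of d1 ip] by linarith
  have b: "(4 * Dl ^ (d1 - 1) + 4) * Dl ^ d1 = 4 * Dl ^ (2 * d1 - 1) + 4 * Dl ^ d1"
  proof -
    have dd: "d1 - 1 + d1 = 2 * d1 - 1" using d1 by simp
    have "Dl ^ (d1 - 1) * Dl ^ d1 = Dl ^ (d1 - 1 + d1)" by (simp add: power_add)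
    then have "Dl ^ (d1 - 1) * Dl ^ d1 = Dl ^ (2 * d1 - 1)" unfolding dd .
    then show ?thesis by (simp add: algebra_simps)
  qed
  have c: "Dl ^ d1 \<le> Dl ^ (2 * d1 - 1)" using D d1 by (intro power_increasing) auto
  show ?thesis using a b c by linarith
qed

end



context aobl begin

fun whr :: "nat \<Rightarrow> nat list \<Rightarrow> bool" where
  "whr v [] = True"
| "whr v (p # ps) = (\<not> col (nbr v p) \<and> whr (nbr v p) ps)"

lemma cB_walk: "u \<in> V \<Longrightarrow> cB k u ip \<Longrightarrow> \<exists>ps z. length ps \<le> k \<and> we u ps = Some z \<and> col z"
proof (induction k arbitrary: u ip)
  case 0 then show ?case by (intro exI[of _ "[]"]) simp
next
  case (Suc k)
  show ?case
  proof (cases "col u")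
    case True then show ?thesis by (intro exI[of _ "[]"]) simp
  next
    case False
    then obtain q where q: "q \<in> Pset (deg u) ip 0" "cB k (nbr u q) (Some (bk u q))" using Suc.prems by auto
    have qd: "q < deg u" using q(1) by (simp add: Pset_def)
    have "nbr u q \<in> V" using pgD[OF Suc.prems(1) qd] by blast
    then obtain ps z where "length ps \<le> k" "we (nbr u q) ps = Some z" "col z" using Suc.IH q(2) by blast
    then show ?thesis using qd by (intro exI[of _ "q # ps"]) auto
  qed
qed

lemma nbw_cB: "nbw u ip ps \<Longrightarrow> we u ps = Some z \<Longrightarrow> col z \<Longrightarrow> length ps \<le> k \<Longrightarrow> cB k u ip"
proof (induction ps arbitrary: u ip k)
  case Nil then show ?case by (cases k) auto
next
  case (Cons p ps)
  then obtain k' where k: "k = Suc k'" by (cases k) auto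
  have "cB k' (nbr u p) (Some (bk u p))" using Cons k by (auto split: if_splits)
  moreover have "p \<in> Pset (deg u) ip 0" using Cons.prems(1) by (simp add: Pset_def)
  ultimately show ?case using k by auto
qed

lemma wF_white: "wF k v (Some e) \<Longrightarrow> \<not> col v"
  by (cases k) auto

lemma wF_walk: "wF k v ip \<Longrightarrow> \<exists>ps w. length ps = k \<and> we v ps = Some w \<and> whr v ps \<and> \<not> col w \<and> \<not> cB (d1 - 1) w None"
proof (induction k arbitrary: v ip)
  case 0 then show ?case by (intro exI[of _ "[]"]) simp
next
  case (Suc k)
  obtain q where q: "q \<in> Pset (deg v) ip 0" "wF k (nbr v q) (Some (bk v q))"
    using Suc.prems by (auto split: if_splits)
  have qd: "q < deg v" using q(1) by (simp add: Pset_def)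
  obtain ps w where "length ps = k" "we (nbr v q) ps = Some w" "whr (nbr v q) ps" "\<not> col w" "\<not> cB (d1 - 1) w None"
    using Suc.IH[OF q(2)] by blast
  then show ?case using qd wF_white[OF q(2)] by (intro exI[of _ "q # ps"]) auto
qed

lemma walk_wF: "nbw v ip ps \<Longrightarrow> we v ps = Some w \<Longrightarrow> whr v ps \<Longrightarrow> (ip \<noteq> None \<longrightarrow> \<not> col v) \<Longrightarrow>
   \<not> col w \<Longrightarrow> \<not> cB (d1 - 1) w None \<Longrightarrow> wF (length ps) v ip"
proof (induction ps arbitrary: v ip)
  case Nil then show ?case by simp
next
  case (Cons p ps)
  have p: "p < deg v" "ip \<noteq> Some p" using Cons.prems(1) by auto
  have "wF (length ps) (nbr v p) (Some (bk v p))"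
    using Cons.IH[of "nbr v p" "Some (bk v p)"] Cons.prems p by auto
  moreover have "p \<in> Pset (deg v) ip 0" using p by (simp add: Pset_def)
  ultimately show ?case using Cons.prems(4) by auto
qed

lemma sw_whr: "v \<in> V \<Longrightarrow> we v ps = Some z \<Longrightarrow> length ps = gd v z \<Longrightarrow> j \<le> length ps \<Longrightarrow>
   (\<forall>i y. 1 \<le> i \<and> i \<le> j \<and> y \<in> V \<and> gd y z = gd v z - i \<longrightarrow> \<not> col y) \<Longrightarrow> whr v (take j ps)"
proof (induction j arbitrary: v ps)
  case 0 then show ?case by simp
next
  case (Suc j)
  then obtain p ps' where ps: "ps = p # ps'" by (cases ps) auto
  from sw_tail[OF Suc.prems(1) Suc.prems(2)[unfolded ps] Suc.prems(3)[unfolded ps]]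
  have p: "p < deg v" and w': "we (nbr v p) ps' = Some z" and l: "gd (nbr v p) z = length ps'" by auto
  have V': "nbr v p \<in> V" using pgD[OF Suc.prems(1) p] by auto
  have l2: "gd (nbr v p) z = gd v z - 1" using l Suc.prems(3) ps by simp
  have w1: "\<not> col (nbr v p)" using Suc.prems(5) V' l2 by auto
  have "whr (nbr v p) (take j ps')"
  proof (rule Suc.IH[OF V' w' l[symmetric]])
    show "j \<le> length ps'" using Suc.prems(4) ps by simp
    show "\<forall>i y. 1 \<le> i \<and> i \<le> j \<and> y \<in> V \<and> gd y z = gd (nbr v p) z - i \<longrightarrow> \<not> col y"
    proof (intro allI impI)
      fix i y assume a: "1 \<le> i \<and> i \<le> j \<and> y \<in> V \<and> gd y z = gd (nbr v p) z - i"
      then have "gd y z = gd v z - Suc i" using l2 by simp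
      then have "1 \<le> Suc i \<and> Suc i \<le> Suc j \<and> y \<in> V \<and> gd y z = gd v z - Suc i" using a by simp
      then show "\<not> col y" using Suc.prems(5) by blast
    qed
  qed
  then show ?case using ps w1 by simp
qed

lemma band: "r \<in> V \<Longrightarrow> v \<in> V \<Longrightarrow> we v ps = Some w \<Longrightarrow> whr v ps \<Longrightarrow> ps \<noteq> [] \<Longrightarrow>
   a + 1 \<le> gd r v \<Longrightarrow> gd r v \<le> a + d1 \<Longrightarrow>
   (\<forall>y\<in>V. (gd r y = a \<or> gd r y = a + d1 \<or> gd r y = a + d1 + 1) \<longrightarrow> col y) \<Longrightarrow>
   a + 1 \<le> gd r w \<and> gd r w + 1 \<le> a + d1"
proof (induction ps arbitrary: v)
  case Nil then show ?case by simp
next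
  case (Cons p ps)
  have p: "p < deg v" and w': "we (nbr v p) ps = Some w" using Cons.prems(3) by (auto split: if_splits)
  have V': "nbr v p \<in> V" using pgD[OF Cons.prems(2) p] by auto
  have "we v [p] = Some (nbr v p)" using p by simp
  from gd_walk[OF Cons.prems(1,2) this]
  have d: "gd r (nbr v p) \<le> gd r v + 1" "gd r v \<le> gd r (nbr v p) + 1" by auto
  have wh: "\<not> col (nbr v p)" "whr (nbr v p) ps" using Cons.prems(4) by auto
  have b: "a + 1 \<le> gd r (nbr v p) \<and> gd r (nbr v p) + 1 \<le> a + d1"
  proof -
    have "gd r (nbr v p) \<noteq> a" "gd r (nbr v p) \<noteq> a + d1" "gd r (nbr v p) \<noteq> a + d1 + 1"
      using Cons.prems(8) V' wh(1) by auto
    then show ?thesis using d Cons.prems(6,7) by linarith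
  qed
  show ?case
  proof (cases "ps = []")
    case True then show ?thesis using w' b by simp
  next
    case False
    show ?thesis using Cons.IH[OF Cons.prems(1) V' w' wh(2) False] b Cons.prems(8) by linarith
  qed
qed

end



lemma modq: "0 < (q::nat) \<Longrightarrow> q * k \<le> t \<Longrightarrow> t < q * k + q \<Longrightarrow> t mod q = t - q * k"
proof -
  assume q: "0 < q" and a: "q * k \<le> t" and b: "t < q * k + q"
  obtain s where s: "t = q * k + s" using a le_Suc_ex by blast
  then have "s < q" using b by simp
  then show ?thesis using s by simp
qed

lemma modq2: "s < (q::nat) \<Longrightarrow> (q * k + s) mod q = s" by simp

context aobl begin

lemma col_eq: "col = al_black deg nbr r d1 d2 \<Longrightarrow>
  col y = (gd r y mod (d1 + d2 + 2) = d2 + 1 \<or> gd r y mod (d1 + d2 + 2) = d1 + d2 + 1 \<or>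
           gd r y mod (d1 + d2 + 2) = 0 \<or> gd r y mod (d1 + d2 + 2) = 1)"
  by (simp add: al_black_def inA_def inB_def inC_def inD_def al_q_def)

lemma deg2: "r \<in> V \<Longrightarrow> x \<in> V \<Longrightarrow> 2 \<le> gd r x \<Longrightarrow> 2 \<le> Dl"
proof -
  assume r: "r \<in> V" and x: "x \<in> V" and L: "2 \<le> gd r x"
  obtain ps where ps: "length ps = gd x r" "we x ps = Some r" using gd_conn[OF x r] by blast
  have "gd x r = gd r x" using gd_sym[OF r x] .
  then obtain p0 p1 ps' where pe: "ps = p0 # p1 # ps'" using ps(1) L
    by (metis Suc_le_length_iff numeral_2_eq_2)
  have "nbw x None ps" using sw_nbw[OF x ps(2) ps(1), of None] pe by simp
  then have h: "p0 < deg x" "p1 < deg (nbr x p0)" "p1 \<noteq> bk x p0" using pe by auto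
  have g: "nbr x p0 \<in> V" "bk x p0 < deg (nbr x p0)" using pgD[OF x h(1)] by auto
  have "2 \<le> deg (nbr x p0)" using h(2,3) g(2) by linarith
  then show ?thesis using degle[OF g(1)] by linarith
qed

lemma A_case:
  assumes cd: "col = al_black deg nbr r d1 d2" and r: "r \<in> V" and d2: "2 * d1 \<le> d2" and x: "x \<in> V"
    and xm: "gd r x mod (d1 + d2 + 2) = d2 + 1"
  shows "wF d1 x None"
proof -
  define q where "q = d1 + d2 + 2"
  define L where "L = gd r x"
  define M where "M = q * (L div q)"
  have q0: "0 < q" unfolding q_def by simp
  have LM: "L = M + (d2 + 1)" using xm div_mult_mod_eq[of L q] unfolding M_def L_def q_def
    by (metis add.commute mult.commute)
  have white: "\<not> col y" if "y \<in> V" "L + 1 \<le> gd r y + 2 * d1" "gd r y + 1 \<le> L" for y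
  proof -
    have t1: "M + 2 \<le> gd r y" "gd r y \<le> M + d2" using that(2,3) LM d2 by linarith+
    have "gd r y mod q = gd r y - M" unfolding M_def
      by (rule modq[OF q0]) (use t1 M_def q_def in linarith)+
    then show ?thesis using col_eq[OF cd, of y] t1 unfolding q_def by auto
  qed
  obtain ps where ps: "length ps = gd x r" "we x ps = Some r" using gd_conn[OF x r] by blast
  have Lx: "gd x r = L" using gd_sym[OF r x] unfolding L_def .
  have dL: "d1 \<le> L" using LM d2 by linarith
  obtain w where w: "we x (take d1 ps) = Some w" "gd w r = L - d1" "w \<in> V"
    using sw_take[OF x ps(2) ps(1), of d1] ps(1) Lx dL by auto
  have nb: "nbw x None (take d1 ps)"
    by (rule nbw_take, rule sw_nbw[OF x ps(2) ps(1)]) (cases ps, auto)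
  have wh: "whr x (take d1 ps)"
  proof (rule sw_whr[OF x ps(2) ps(1)])
    show "d1 \<le> length ps" using ps(1) Lx dL by simp
    show "\<forall>i y. 1 \<le> i \<and> i \<le> d1 \<and> y \<in> V \<and> gd y r = gd x r - i \<longrightarrow> \<not> col y"
    proof (intro allI impI)
      fix i y assume a: "1 \<le> i \<and> i \<le> d1 \<and> y \<in> V \<and> gd y r = gd x r - i"
      then have "gd r y = L - i" using gd_sym[OF r, of y] Lx by simp
      then have "L + 1 \<le> gd r y + 2 * d1" "gd r y + 1 \<le> L" using a dL by linarith+
      then show "\<not> col y" using white[of y] a by blast
    qed
  qed
  have gw: "gd r w = L - d1" using gd_sym[OF r w(3)] w(2) by simp
  have cw: "\<not> col w" using white[OF w(3)] gw dL d1 by simp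
  have ncb: "\<not> cB (d1 - 1) w None"
  proof
    assume "cB (d1 - 1) w None"
    then obtain ps2 z where z: "length ps2 \<le> d1 - 1" "we w ps2 = Some z" "col z" using cB_walk[OF w(3)] by blast
    have zV: "z \<in> V" using we_V[OF w(3) z(2)] .
    have "gd r z \<le> gd r w + length ps2 \<and> gd r w \<le> gd r z + length ps2" using gd_walk[OF r w(3) z(2)] .
    then have "L + 1 \<le> gd r z + 2 * d1" "gd r z + 1 \<le> L" using z(1) gw dL d1 by linarith+
    then show False using white[OF zV] z(3) by blast
  qed
  have "wF (length (take d1 ps)) x None"
    by (rule walk_wF[OF nb w(1) wh _ cw ncb]) simp
  then show ?thesis using ps(1) Lx dL by simp
qed

lemma B_case:
  assumes cd: "col = al_black deg nbr r d1 d2" and r: "r \<in> V" and d2: "2 * d1 \<le> d2" and x: "x \<in> V"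
    and xm: "gd r x mod (d1 + d2 + 2) = d1 + d2 + 1"
  shows "\<not> wF d1 x None"
proof
  assume F: "wF d1 x None"
  define q where "q = d1 + d2 + 2"
  define L where "L = gd r x"
  define M where "M = q * (L div q)"
  define a where "a = M + d2 + 1"
  have q0: "0 < q" unfolding q_def by simp
  have LM: "L = M + (d1 + d2 + 1)" using xm div_mult_mod_eq[of L q] unfolding M_def L_def q_def
    by (metis add.commute mult.commute)
  have blk: "\<forall>y\<in>V. (gd r y = a \<or> gd r y = a + d1 \<or> gd r y = a + d1 + 1) \<longrightarrow> col y"
  proof (intro ballI impI)
    fix y assume y: "y \<in> V" and c: "gd r y = a \<or> gd r y = a + d1 \<or> gd r y = a + d1 + 1"
    have "a = q * (L div q) + (d2 + 1)" unfolding a_def M_def by simp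
    then have m1: "a mod q = d2 + 1" using modq2[of "d2 + 1" q "L div q"] unfolding q_def by simp
    have m2: "(a + d1) mod q = d1 + d2 + 1" using xm LM unfolding a_def L_def q_def by (simp add: algebra_simps)
    have m3: "(a + d1 + 1) mod q = 0"
    proof -
      have "a + d1 + 1 = q * (L div q) + q" unfolding a_def M_def q_def by simp
      then show ?thesis by simp
    qed
    show "col y" using c m1 m2 m3 col_eq[OF cd, of y] unfolding q_def by auto
  qed
  obtain ps w where pw: "length ps = d1" "we x ps = Some w" "whr x ps" "\<not> col w" "\<not> cB (d1 - 1) w None"
    using wF_walk[OF F] by blast
  have ne: "ps \<noteq> []" using pw(1) d1 by auto
  have bw: "a + 1 \<le> gd r w \<and> gd r w + 1 \<le> a + d1"
    by (rule band[OF r x pw(2) pw(3) ne _ _ blk]) (use LM a_def L_def d1 in linarith)+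
  have wV: "w \<in> V" using we_V[OF x pw(2)] .
  obtain qs where qs: "length qs = gd w r" "we w qs = Some r" using gd_conn[OF wV r] by blast
  have D: "gd w r = gd r w" using gd_sym[OF r wV] by simp
  obtain y where y: "we w (take (gd r w - a) qs) = Some y" "gd y r = length qs - (gd r w - a)" "y \<in> V"
    using sw_take[OF wV qs(2) qs(1), of "gd r w - a"] qs(1) D by auto
  have gy: "gd r y = a" using gd_sym[OF r y(3)] y(2) qs(1) D bw by simp
  have nb: "nbw w None (take (gd r w - a) qs)"
    by (rule nbw_take, rule sw_nbw[OF wV qs(2) qs(1)]) (cases qs, auto)
  have "cB (d1 - 1) w None"
    by (rule nbw_cB[OF nb y(1)]) (use blk y(3) gy bw in auto)
  then show False using pw(5) by blast
qed

end



lemma bitlen_pow: "1 \<le> n \<Longrightarrow> 2 ^ (bitlen n) \<le> 2 * n"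
proof (induction n rule: less_induct)
  case (less n)
  show ?case
  proof (cases "n < 2")
    case True then show ?thesis using less.prems by (simp add: bitlen_small)
  next
    case False
    then have "2 ^ bitlen (n div 2) \<le> 2 * (n div 2)" using less.IH[of "n div 2"] by simp
    then have "2 ^ bitlen n \<le> 2 * (2 * (n div 2))" using False by (simp add: bitlen_big)
    then show ?thesis by linarith
  qed
qed

lemma bitlen_log: "2 \<le> n \<Longrightarrow> real (bitlen n) \<le> 2 * log 2 (real n)"
proof -
  assume n: "2 \<le> n"
  have "real (bitlen n) \<le> log 2 (real (2 * n))" using le_log2_of_power[OF bitlen_pow[of n]] n by simp
  also have "\<dots> = 1 + log 2 (real n)" using n by (simp add: log_mult)
  finally have a: "real (bitlen n) \<le> 1 + log 2 (real n)" .
  have "real 1 \<le> log 2 (real n)" using le_log2_of_power[of 1 n] n by simp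
  then show ?thesis using a by simp
qed

lemma bits_real: "2 \<le> Dl \<Longrightarrow> 2 \<le> d1 \<Longrightarrow> real (6 + 4 * d1 * bitlen Dl) \<le> 11 * real d1 * log 2 (real Dl)"
proof -
  assume D: "2 \<le> Dl" and d: "2 \<le> d1"
  define l where "l = log 2 (real Dl)"
  have b: "real (bitlen Dl) \<le> 2 * l" using bitlen_log[OF D] unfolding l_def .
  have l1: "1 \<le> l" using le_log2_of_power[of 1 Dl] D unfolding l_def by simp
  have "real d1 * 1 \<le> real d1 * l" using l1 by (intro mult_left_mono) auto
  moreover have "2 \<le> real d1" using d by simp
  ultimately have P: "2 \<le> real d1 * l" by linarith
  have "real d1 * real (bitlen Dl) \<le> real d1 * (2 * l)" using b by (intro mult_left_mono) auto
  then show ?thesis using P by (simp add: l_def[symmetric] algebra_simps)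
qed

lemma main:
  fixes V :: "nat set" and deg :: "nat \<Rightarrow> nat" and nbr bk :: "nat \<Rightarrow> nat \<Rightarrow> nat" and r d1 d2 x :: nat
  assumes H: "port_graph V deg nbr bk \<and> connected_pg V deg nbr \<and> al_labeling V deg nbr r d1 d2 \<and>
     x \<in> V \<and> (inA deg nbr r d1 d2 x \<or> inB deg nbr r d1 d2 x)"
  shows "\<exists>n res. robot_exec deg nbr bk (al_black deg nbr r d1 d2) (aob_robot d1) rinit x n x res \<and>
        res = (if inB deg nbr r d1 d2 x then AnsB else AnsA) \<and>
        real n \<le> 11 * real (max_degree V deg) ^ (2 * d1 - 1) \<and>
        (\<forall>i\<le>n. real (state_bits (snd (snd
            (robot_conf deg nbr bk (al_black deg nbr r d1 d2) (aob_robot d1) rinit x i))))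
          \<le> 11 * real d1 * log 2 (real (max_degree V deg)))"
proof -
  from H have pg: "port_graph V deg nbr bk" and cn: "connected_pg V deg nbr" and al: "al_labeling V deg nbr r d1 d2"
    and x: "x \<in> V" and AB: "inA deg nbr r d1 d2 x \<or> inB deg nbr r d1 d2 x" by auto
  have r: "r \<in> V" and d1: "2 \<le> d1" and d2: "2 * d1 \<le> d2" using al unfolding al_labeling_def by auto
  define Dl where "Dl = max_degree V deg"
  define col where "col = al_black deg nbr r d1 d2"
  have fin: "finite V" using pg unfolding port_graph_def by blast
  interpret A: aobl V deg nbr bk col d1 Dl
  proof
    show "port_graph V deg nbr bk" by (rule pg)
    show "connected_pg V deg nbr" by (rule cn)
    show "2 \<le> d1" by (rule d1)
    show "\<And>v. v \<in> V \<Longrightarrow> deg v \<le> Dl" unfolding Dl_def max_degree_def using fin by simp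
  qed
  let ?L = "gdist deg nbr r x"
  have Lm: "?L mod (d1 + d2 + 2) = d2 + 1 \<or> ?L mod (d1 + d2 + 2) = d1 + d2 + 1"
    using AB unfolding inA_def inB_def al_q_def by auto
  have "?L mod (d1 + d2 + 2) \<le> ?L" by simp
  then have L2: "2 \<le> ?L" using Lm d1 d2 by linarith
  have D2: "2 \<le> Dl" using A.deg2[OF r x L2] .
  have "\<exists>c' M'. A.exec (x, None, mk WF [] [] False False) (A.wN d1 x None) c' \<and> fst c' = x \<and>
        A.act c' = w_ret (mk M' (push None []) [] (False \<or> A.wF d1 x None) False)"
    by (rule A.wsearch[unfolded A.WS_def, rule_format]) (use x in \<open>simp_all add: push_def\<close>)
  then obtain c' M' where ex: "A.exec (x, None, rinit) (A.wN d1 x None) c'" "fst c' = x"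
    "A.act c' = (mk M' [] [] (A.wF d1 x None) False, Halt (if A.wF d1 x None then AnsA else AnsB))"
    by (auto simp: push_def rinit_def w_ret_nil)
  obtain e' s' where ce: "c' = (x, e', s')" using ex(2) by (cases c') auto
  define n where "n = A.wN d1 x None"
  have res: "(if A.wF d1 x None then AnsA else AnsB) = (if inB deg nbr r d1 d2 x then AnsB else AnsA)"
  proof (cases "inB deg nbr r d1 d2 x")
    case True
    then have "?L mod (d1 + d2 + 2) = d1 + d2 + 1" unfolding inB_def al_q_def by simp
    then have "\<not> A.wF d1 x None" using A.B_case[OF col_def r d2 x] by blast
    then show ?thesis using True by simp
  next
    case False
    then have "?L mod (d1 + d2 + 2) = d2 + 1" using AB unfolding inA_def al_q_def by simp
    then have "A.wF d1 x None" using A.A_case[OF col_def r d2 x] by blast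
    then show ?thesis using False by simp
  qed
  have conf: "robot_conf deg nbr bk col (aob_robot d1) rinit x i = (A.stp ^^ i) (x, None, rinit)" for i
    unfolding robot_conf_def ..
  have e1: "(A.stp ^^ n) (x, None, rinit) = c'" and e2: "\<forall>i<n. A.good ((A.stp ^^ i) (x, None, rinit))"
    and e3: "\<forall>i. 0 < i \<and> i \<le> n \<longrightarrow> state_bits (snd (snd ((A.stp ^^ i) (x, None, rinit)))) \<le> A.Bd"
    using ex(1) unfolding A.exec_def n_def by auto
  have re: "robot_exec deg nbr bk col (aob_robot d1) rinit x n x (if inB deg nbr r d1 d2 x then AnsB else AnsA)"
    unfolding robot_exec_def conf
  proof (intro conjI allI impI)
    fix i assume "i < n"
    then show "case (A.stp ^^ i) (x, None, rinit) of (v, e, s) \<Rightarrow>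
        \<exists>s' p. aob_robot d1 s (deg v) (col v) e = (s', Move p) \<and> p < deg v"
      using e2[unfolded A.good_def, rule_format, of i] by fast
  next
    show "case (A.stp ^^ n) (x, None, rinit) of (v, e, s) \<Rightarrow>
       (\<exists>s'. aob_robot d1 s (deg v) (col v) e = (s', Halt (if inB deg nbr r d1 d2 x then AnsB else AnsA))) \<and> v = x"
      using e1 ex(3)[unfolded A.act_def] res ce by auto
  qed
  have nb: "real n \<le> 11 * real Dl ^ (2 * d1 - 1)"
  proof -
    have "n \<le> 8 * Dl ^ (2 * d1 - 1)" unfolding n_def by (rule A.n_bound[OF x D2])
    then have "real n \<le> 8 * real Dl ^ (2 * d1 - 1)" by (metis of_nat_le_iff of_nat_mult of_nat_numeral of_nat_power)
    moreover have "0 \<le> real Dl ^ (2 * d1 - 1)" by simp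
    ultimately show ?thesis by linarith
  qed
  have bb: "real (A.Bd) \<le> 11 * real d1 * log 2 (real Dl)" unfolding A.Bd_def by (rule bits_real[OF D2 d1])
  have b0: "real (state_bits rinit) \<le> 11 * real d1 * log 2 (real Dl)"
  proof -
    have "state_bits rinit = 6" by (simp add: state_bits_def rinit_def)
    moreover have "real (6::nat) \<le> real A.Bd" unfolding A.Bd_def by simp
    ultimately show ?thesis using bb by linarith
  qed
  have bits: "\<forall>i\<le>n. real (state_bits (snd (snd (robot_conf deg nbr bk col (aob_robot d1) rinit x i))))
          \<le> 11 * real d1 * log 2 (real Dl)"
  proof (intro allI impI)
    fix i assume i: "i \<le> n"
    show "real (state_bits (snd (snd (robot_conf deg nbr bk col (aob_robot d1) rinit x i))))
          \<le> 11 * real d1 * log 2 (real Dl)"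
    proof (cases "i = 0")
      case True then show ?thesis using b0 unfolding conf by simp
    next
      case False
      then have "state_bits (snd (snd ((A.stp ^^ i) (x, None, rinit)))) \<le> A.Bd" using e3 i by simp
      then show ?thesis using bb unfolding conf by (meson of_nat_le_iff order.trans)
    qed
  qed
  show ?thesis using re nb bits unfolding col_def Dl_def by blast
qed

theorem lemma4:
  "\<exists>c::real. \<forall>(V::nat set) deg nbr back r d1 d2 x.
     port_graph V deg nbr back \<and> connected_pg V deg nbr \<and> al_labeling V deg nbr r d1 d2 \<and>
     x \<in> V \<and> (inA deg nbr r d1 d2 x \<or> inB deg nbr r d1 d2 x) \<longrightarrow>
     (\<exists>n res. robot_exec deg nbr back (al_black deg nbr r d1 d2) (aob_robot d1) rinit x n x res \<and>
        res = (if inB deg nbr r d1 d2 x then AnsB else AnsA) \<and>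
        real n \<le> c * real (max_degree V deg) ^ (2 * d1 - 1) \<and>
        (\<forall>i\<le>n. real (state_bits (snd (snd
            (robot_conf deg nbr back (al_black deg nbr r d1 d2) (aob_robot d1) rinit x i))))
          \<le> c * real d1 * log 2 (real (max_degree V deg))))"
  by (intro exI[of _ "11::real"] allI impI) (rule main)


end
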